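(* Let $k$ be a field and let $I$ be an almost reverse lexicographic ideal in $R=k[x_1,\ldots,x_n]$ (the zero ideal being regarded as almost reverse lexicographic). Then the sequence $h_\bullet=(h_0,h_1,\ldots)$ with $h_d=H(R/I,d)$ is unimodal at each tail.
   Context: $H(R/I,d)=\dim_k(R/I)_d$. Degree reverse lexicographic order: for $M=x^\alpha,N=x^\beta$, $M>N$ iff $\deg M>\deg N$, or degrees are equal and for the largest $s$ with $\alpha_s\neq\beta_s$ one has $\alpha_s<\beta_s$. A monomial ideal $I$ is almost reverse lexicographic if for every monomial $M$ and every minimal monomial generator $N$ of $I$ with $\deg M=\deg N$ and $M>N$, $M\in I$. For a sequence $h_\bullet$ of nonnegative integers with $h_0=1$: put $h^{(0)}_\bullet=h_\bullet$ and, for $1\le i<h_1$, $h^{(i)}_0=1$ and $h^{(i)}_d=\max\{0,h^{(i-1)}_d-h^{(i-1)}_{d-1}\}$ for $d\ge1$. For $0\le i<\max\{1,h_1\}$ let $r_i=\min\{d\ge1: h^{(i)}_d\le h^{(i)}_{d-1}\}$ ($\infty$ if no such $d$), and let $D(h_\bullet)=\min\{i: r_i<\infty\}$. The sequence is unimodal at each tail if for every $i$ with $D(h_\bullet)\le i<\max\{1,h_1\}$ one has $h^{(i)}_d\le h^{(i)}_{d-1}$ for all $d\ge r_i$. *)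

theory Defs
  imports Main "HOL-Library.Extended_Nat"
begin

(* Monomials of R = k[x_1,...,x_n]: exponent vectors a :: nat => nat, where
   a i is the exponent of x_(i+1); entries beyond index n-1 vanish. *)
definition monomials :: "nat \<Rightarrow> (nat \<Rightarrow> nat) set" where
  "monomials n = {a. \<forall>i\<ge>n. a i = 0}"

definition mdeg :: "nat \<Rightarrow> (nat \<Rightarrow> nat) \<Rightarrow> nat" where
  "mdeg n a = (\<Sum>i<n. a i)"

definition mdvd :: "(nat \<Rightarrow> nat) \<Rightarrow> (nat \<Rightarrow> nat) \<Rightarrow> bool" where
  "mdvd a b \<longleftrightarrow> (\<forall>i. a i \<le> b i)"

(* A monomial ideal, represented by the set of monomials it contains
   (a monomial ideal is determined by, and is the k-span of, these). *)
definition monomial_ideal :: "nat \<Rightarrow> (nat \<Rightarrow> nat) set \<Rightarrow> bool" where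
  "monomial_ideal n I \<longleftrightarrow> I \<subseteq> monomials n \<and>
     (\<forall>a\<in>I. \<forall>b\<in>monomials n. mdvd a b \<longrightarrow> b \<in> I)"

definition min_gens :: "(nat \<Rightarrow> nat) set \<Rightarrow> (nat \<Rightarrow> nat) set" where
  "min_gens I = {a\<in>I. \<forall>b\<in>I. mdvd b a \<longrightarrow> b = a}"

definition drl_gt :: "nat \<Rightarrow> (nat \<Rightarrow> nat) \<Rightarrow> (nat \<Rightarrow> nat) \<Rightarrow> bool" where
  "drl_gt n a b \<longleftrightarrow> mdeg n a > mdeg n b \<or>
     (mdeg n a = mdeg n b \<and> (\<exists>s<n. a s \<noteq> b s) \<and>
      (let s = (GREATEST s. s < n \<and> a s \<noteq> b s) in a s < b s))"

definition almost_revlex :: "nat \<Rightarrow> (nat \<Rightarrow> nat) set \<Rightarrow> bool" where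
  "almost_revlex n I \<longleftrightarrow>
     (\<forall>M\<in>monomials n. \<forall>N\<in>min_gens I.
        mdeg n M = mdeg n N \<and> drl_gt n M N \<longrightarrow> M \<in> I)"

(* H(R/I,d) = dim_k (R/I)_d = number of degree-d monomials not in I *)
definition hilb :: "nat \<Rightarrow> (nat \<Rightarrow> nat) set \<Rightarrow> nat \<Rightarrow> nat" where
  "hilb n I d = card {a\<in>monomials n. mdeg n a = d \<and> a \<notin> I}"

(* h^(i)_d ; nat subtraction is max{0, _ - _} *)
fun hiter :: "(nat \<Rightarrow> nat) \<Rightarrow> nat \<Rightarrow> nat \<Rightarrow> nat" where
  "hiter h 0 d = h d"
| "hiter h (Suc i) 0 = 1"
| "hiter h (Suc i) (Suc d) = hiter h i (Suc d) - hiter h i d"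

definition r_index :: "(nat \<Rightarrow> nat) \<Rightarrow> nat \<Rightarrow> enat" where
  "r_index h i = (if \<exists>d\<ge>1. hiter h i d \<le> hiter h i (d - 1)
                   then enat (LEAST d. d \<ge> 1 \<and> hiter h i d \<le> hiter h i (d - 1))
                   else \<infinity>)"

definition D_index :: "(nat \<Rightarrow> nat) \<Rightarrow> enat" where
  "D_index h = (if \<exists>i<max 1 (h 1). r_index h i \<noteq> \<infinity>
                 then enat (LEAST i. i < max 1 (h 1) \<and> r_index h i \<noteq> \<infinity>)
                 else \<infinity>)"

definition unimodal_at_each_tail :: "(nat \<Rightarrow> nat) \<Rightarrow> bool" where
  "unimodal_at_each_tail h \<longleftrightarrow>
     (\<forall>i. D_index h \<le> enat i \<and> i < max 1 (h 1) \<longrightarrow>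
        (\<forall>d. r_index h i \<le> enat d \<longrightarrow> hiter h i d \<le> hiter h i (d - 1)))"

end

theory Submission imports Defs begin

lemma mon_zero: "a \<in> monomials n \<Longrightarrow> i \<ge> n \<Longrightarrow> a i = 0"
  by (simp add: monomials_def)

lemma mon_mono: "k \<le> n \<Longrightarrow> monomials k \<subseteq> monomials n"
  by (auto simp: monomials_def)

lemma mdeg_restrict: "a \<in> monomials k \<Longrightarrow> k \<le> n \<Longrightarrow> mdeg n a = mdeg k a"
  unfolding mdeg_def
  by (rule sum.mono_neutral_right) (auto simp: monomials_def)

lemma mdeg_Suc: "mdeg (Suc p) a = mdeg p a + a p"
  by (simp add: mdeg_def)

lemma mdeg_upd_p: "mdeg p (a(p := v)) = mdeg p a"
  unfolding mdeg_def by (rule sum.cong) auto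

lemma finite_deg: "finite {a\<in>monomials m. mdeg m a = d}"
proof -
  have "{a\<in>monomials m. mdeg m a = d} \<subseteq>
     {f. \<forall>x. (x \<in> {..<m} \<longrightarrow> f x \<in> {..d}) \<and> (x \<notin> {..<m} \<longrightarrow> f x = 0)}"
  proof (rule subsetI)
    fix a assume a: "a \<in> {a\<in>monomials m. mdeg m a = d}"
    have "a x \<le> d" if "x < m" for x
      using a that unfolding mdeg_def using member_le_sum[of x "{..<m}" a] by auto
    then show "a \<in> {f. \<forall>x. (x \<in> {..<m} \<longrightarrow> f x \<in> {..d}) \<and> (x \<notin> {..<m} \<longrightarrow> f x = 0)}"
      using a by (auto simp: monomials_def)
  qed
  then show ?thesis
    by (rule finite_subset) (rule finite_set_of_finite_funs; simp)
qed

lemma drl_restrict: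
  assumes "a \<in> monomials k" "b \<in> monomials k" "k \<le> n"
  shows "drl_gt n a b = drl_gt k a b"
proof -
  have z: "s < k" if "s < n" "a s \<noteq> b s" for s
  proof (rule ccontr)
    assume "\<not> s < k"
    then have "a s = 0" "b s = 0" using assms(1,2) by (auto simp: monomials_def)
    then show False using that by simp
  qed
  have e: "(\<lambda>s. s < n \<and> a s \<noteq> b s) = (\<lambda>s. s < k \<and> a s \<noteq> b s)"
    using z assms(3) by (auto simp: fun_eq_iff)
  have e2: "(\<exists>s<n. a s \<noteq> b s) = (\<exists>s<k. a s \<noteq> b s)"
    using z assms(3) by (meson order_less_le_trans)
  show ?thesis unfolding drl_gt_def
    using mdeg_restrict[OF assms(1,3)] mdeg_restrict[OF assms(2,3)] e e2 by simp
qed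

lemma mdvd_mdeg: "mdvd a b \<Longrightarrow> mdeg m a \<le> mdeg m b"
  unfolding mdvd_def mdeg_def by (simp add: sum_mono)

lemma mdvd_mon: "mdvd a b \<Longrightarrow> b \<in> monomials k \<Longrightarrow> a \<in> monomials k"
proof -
  assume a: "mdvd a b" "b \<in> monomials k"
  have "a i = 0" if "i \<ge> k" for i
  proof -
    have "a i \<le> b i" using a by (simp add: mdvd_def)
    moreover have "b i = 0" using a that by (simp add: monomials_def)
    ultimately show ?thesis by simp
  qed
  then show ?thesis by (simp add: monomials_def)
qed

lemma restrict_mi: "monomial_ideal n I \<Longrightarrow> k \<le> n \<Longrightarrow> monomial_ideal k (I \<inter> monomials k)"
  unfolding monomial_ideal_def using mon_mono by blast

lemma min_gens_restrict: "N \<in> min_gens (I \<inter> monomials k) \<Longrightarrow> N \<in> min_gens I"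
  unfolding min_gens_def using mdvd_mon by blast

lemma restrict_ar:
  assumes "almost_revlex n I" "k \<le> n"
  shows "almost_revlex k (I \<inter> monomials k)"
  unfolding almost_revlex_def
proof (intro ballI impI)
  fix M N assume M: "M \<in> monomials k" and N: "N \<in> min_gens (I \<inter> monomials k)"
    and c: "mdeg k M = mdeg k N \<and> drl_gt k M N"
  have N1: "N \<in> min_gens I" "N \<in> monomials k" using N min_gens_restrict[OF N]
    by (auto simp: min_gens_def)
  have Mn: "M \<in> monomials n" using mon_mono[OF assms(2)] M by blast
  have c2: "mdeg n M = mdeg n N \<and> drl_gt n M N"
    using c mdeg_restrict[OF M assms(2)] mdeg_restrict[OF N1(2) assms(2)]
      drl_restrict[OF M N1(2) assms(2)] by simp
  have "M \<in> I" using assms(1) Mn N1(1) c2 unfolding almost_revlex_def by blast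
  then show "M \<in> I \<inter> monomials k" using M by simp
qed


lemma mdvd_refl: "mdvd c c" by (simp add: mdvd_def)

lemma mdvd_trans: "mdvd a b \<Longrightarrow> mdvd b c \<Longrightarrow> mdvd a c"
  unfolding mdvd_def using order_trans by blast

lemma mi_sub: "monomial_ideal m J \<Longrightarrow> a \<in> J \<Longrightarrow> a \<in> monomials m"
  unfolding monomial_ideal_def by blast

lemma mi_up: "monomial_ideal m J \<Longrightarrow> a \<in> J \<Longrightarrow> b \<in> monomials m \<Longrightarrow> mdvd a b \<Longrightarrow> b \<in> J"
  unfolding monomial_ideal_def by blast

lemma up_closed:
  assumes mi: "monomial_ideal m J" and km: "k \<le> m"
    and base: "\<And>M. M \<in> monomials k \<Longrightarrow> mdeg k M = e \<Longrightarrow> M \<in> J"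
  shows "N \<in> monomials k \<Longrightarrow> mdeg k N \<ge> e \<Longrightarrow> N \<in> J"
proof (induction "mdeg k N - e" arbitrary: N)
  case 0
  then have "mdeg k N = e" by simp
  then show ?case using base 0 by blast
next
  case (Suc t)
  then have pos: "mdeg k N > 0" by simp
  have "\<exists>i<k. N i > 0"
  proof (rule ccontr)
    assume "\<not> (\<exists>i<k. N i > 0)"
    then have "\<forall>i\<in>{..<k}. N i = 0" by auto
    then have "mdeg k N = 0" unfolding mdeg_def by simp
    then show False using pos by simp
  qed
  then obtain i where i: "i < k" "N i > 0" by blast
  define N' where "N' = N(i := N i - 1)"
  have N'mon: "N' \<in> monomials k" using Suc.prems i by (auto simp: monomials_def N'_def)
  have d1: "mdeg k N = N i + (\<Sum>j\<in>{..<k}-{i}. N j)" unfolding mdeg_def using i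
    by (simp add: sum.remove)
  have d2: "mdeg k N' = N' i + (\<Sum>j\<in>{..<k}-{i}. N' j)" unfolding mdeg_def using i
    by (simp add: sum.remove)
  have d3: "(\<Sum>j\<in>{..<k}-{i}. N' j) = (\<Sum>j\<in>{..<k}-{i}. N j)"
    by (rule sum.cong) (auto simp: N'_def)
  have deg: "mdeg k N = mdeg k N' + 1" using d1 d2 d3 i by (simp add: N'_def)
  have "N' \<in> J" using Suc.hyps(1)[of N'] Suc.hyps(2) N'mon deg by simp
  moreover have "mdvd N' N" by (simp add: mdvd_def N'_def)
  moreover have "N \<in> monomials m" using mon_mono[OF km] Suc.prems by blast
  ultimately show ?case using mi_up[OF mi] by blast
qed

lemma mingen_exists:
  assumes "c \<in> J" "monomial_ideal m J"
  shows "\<exists>G\<in>min_gens J. mdvd G c"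
proof -
  obtain G where G: "G \<in> J \<and> mdvd G c"
    and mn: "\<forall>y. y \<in> J \<and> mdvd y c \<longrightarrow> mdeg m G \<le> mdeg m y"
    using ex_has_least_nat[of "\<lambda>G. G \<in> J \<and> mdvd G c" c "mdeg m"] assms mdvd_refl by blast
  have "G \<in> min_gens J"
    unfolding min_gens_def
  proof (intro CollectI conjI ballI impI)
    show "G \<in> J" using G by blast
    fix b assume b: "b \<in> J" "mdvd b G"
    then have "mdvd b c" using G mdvd_trans by blast
    then have le: "mdeg m G \<le> mdeg m b" using mn b by blast
    show "b = G"
    proof (rule ext)
      fix i show "b i = G i"
      proof (cases "i < m")
        case True
        show ?thesis
        proof (rule ccontr)
          assume "b i \<noteq> G i"
          then have "b i < G i" using b(2) by (simp add: mdvd_def le_neq_implies_less)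
          then have "mdeg m b < mdeg m G" unfolding mdeg_def
            using True b(2) by (intro sum_strict_mono_ex1) (auto simp: mdvd_def)
          then show False using le by simp
        qed
      next
        case False
        then show ?thesis using mi_sub[OF assms(2) b(1)] mi_sub[OF assms(2)] G
          by (simp add: monomials_def)
      qed
    qed
  qed
  then show ?thesis using G by blast
qed


lemma upd_mon: "a \<in> monomials (Suc p) \<Longrightarrow> a(p := v) \<in> monomials (Suc p)"
  by (simp add: monomials_def)

lemma mdeg_upd: "mdeg (Suc p) (a(p := v)) = mdeg p a + v"
  using mdeg_Suc[of p "a(p := v)"] mdeg_upd_p[of p a v] by simp

lemma step:
  assumes mi: "monomial_ideal (Suc p) J" and ar: "almost_revlex (Suc p) J"
  shows "hilb (Suc p) J (Suc d) - hilb (Suc p) J d = hilb p (J \<inter> monomials p) (Suc d)"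
proof -
  define S where "S = (\<lambda>d. {a \<in> monomials (Suc p). mdeg (Suc p) a = d \<and> a \<notin> J})"
  define S' where "S' = {a \<in> monomials p. mdeg p a = Suc d \<and> a \<notin> J \<inter> monomials p}"
  define \<phi> where "\<phi> = (\<lambda>a::nat\<Rightarrow>nat. a(p := Suc (a p)))"
  define K where "K = {a \<in> S d. \<phi> a \<notin> J}"
  have hS: "\<And>d. hilb (Suc p) J d = card (S d)" by (simp add: hilb_def S_def)
  have hS': "hilb p (J \<inter> monomials p) (Suc d) = card S'" by (simp add: hilb_def S'_def)
  have finS: "\<And>d. finite (S d)"
    by (rule finite_subset[OF _ finite_deg]) (auto simp: S_def)
  have finS': "finite S'"
    by (rule finite_subset[OF _ finite_deg]) (auto simp: S'_def)
  have monp: "a \<in> monomials p \<longleftrightarrow> a \<in> monomials (Suc p) \<and> a p = 0" for a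
    by (auto simp: monomials_def) (metis le_antisym not_less_eq_eq)
  have split: "S (Suc d) = S' \<union> \<phi> ` K"
  proof (rule set_eqI, rule iffI)
    fix b assume b: "b \<in> S (Suc d)"
    show "b \<in> S' \<union> \<phi> ` K"
    proof (cases "b p = 0")
      case True
      then have "b \<in> S'" using b monp mdeg_Suc[of p b] by (auto simp: S_def S'_def)
      then show ?thesis by blast
    next
      case False
      define a where "a = b(p := b p - 1)"
      have pa: "\<phi> a = b" using False by (auto simp: \<phi>_def a_def)
      have am: "a \<in> monomials (Suc p)" using b by (auto simp: S_def a_def monomials_def)
      have ad: "mdeg (Suc p) a = d"
        using b False mdeg_Suc[of p a] mdeg_Suc[of p b] mdeg_upd_p[of p b]
        by (simp add: S_def a_def)
      have "mdvd a b" by (simp add: a_def mdvd_def)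
      then have "a \<notin> J" using b mi_up[OF mi] by (auto simp: S_def)
      then have "a \<in> K" using am ad b pa by (simp add: K_def S_def)
      then show ?thesis using pa by blast
    qed
  next
    fix b assume b: "b \<in> S' \<union> \<phi> ` K"
    show "b \<in> S (Suc d)"
    proof (cases "b \<in> S'")
      case True
      from True have b1: "b \<in> monomials p" "mdeg p b = Suc d" "b \<notin> J" by (auto simp: S'_def)
      then have b2: "b \<in> monomials (Suc p)" "b p = 0" using monp[of b] by auto
      then show ?thesis using b1 mdeg_Suc[of p b] by (simp add: S_def)
    next
      case False
      then obtain a where a: "a \<in> K" "b = \<phi> a" using b by blast
      have a2: "a \<in> monomials (Suc p)" "mdeg (Suc p) a = d" using a(1) by (auto simp: K_def S_def)
      have "b \<in> monomials (Suc p)" using a(2) upd_mon[OF a2(1)] by (simp add: \<phi>_def)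
      moreover have "mdeg (Suc p) b = Suc d"
        using a(2) a2 mdeg_upd[of p a "Suc (a p)"] mdeg_Suc[of p a] by (simp add: \<phi>_def)
      ultimately show ?thesis using a by (simp add: S_def K_def)
    qed
  qed
  have z: "x p = 0" if "x \<in> S'" for x using that by (simp add: S'_def monomials_def)
  have disj: "S' \<inter> \<phi> ` K = {}"
  proof (rule equals0I)
    fix x assume "x \<in> S' \<inter> \<phi> ` K"
    then obtain y where h: "x \<in> S'" "x = \<phi> y" by blast
    have "x p = 0" using z h(1) by blast
    moreover have "x p = Suc (y p)" using h(2) by (simp add: \<phi>_def)
    ultimately show False by simp
  qed
  have inj: "inj_on \<phi> K"
  proof (rule inj_onI)
    fix a b assume "\<phi> a = \<phi> b"
    then have "\<forall>i. \<phi> a i = \<phi> b i" by simp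
    show "a = b"
    proof (rule ext)
      fix i show "a i = b i"
      proof (cases "i = p")
        case True then show ?thesis using \<open>\<forall>i. \<phi> a i = \<phi> b i\<close>[rule_format, of p]
          by (simp add: \<phi>_def)
      next
        case False then show ?thesis using \<open>\<forall>i. \<phi> a i = \<phi> b i\<close>[rule_format, of i]
          by (simp add: \<phi>_def)
      qed
    qed
  qed
  have finK: "finite K" using finS[of d] by (simp add: K_def)
  have c1: "card (S (Suc d)) = card S' + card K"
    using split disj inj finK finS' by (simp add: card_Un_disjoint card_image)
  have c2: "card K \<le> card (S d)" using finS[of d] by (intro card_mono) (auto simp: K_def)
  show ?thesis
  proof (cases "K = S d")
    case True
    then show ?thesis using c1 hS hS' by simp
  next
    case False
    then obtain a where a: "a \<in> S d" "\<phi> a \<in> J" by (auto simp: K_def)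
    obtain G where G: "G \<in> min_gens J" "mdvd G (\<phi> a)"
      using mingen_exists[OF a(2) mi] by blast
    have GJ: "G \<in> J" using G by (simp add: min_gens_def)
    have GM: "G \<in> monomials (Suc p)" using mi_sub[OF mi GJ] .
    have Gp: "G p \<noteq> 0"
    proof
      assume G0: "G p = 0"
      have "mdvd G a" using G(2) G0 unfolding mdvd_def \<phi>_def
        by (metis fun_upd_apply zero_le)
      then have "a \<in> J" using mi_up[OF mi GJ] a(1) unfolding S_def by blast
      then show False using a(1) by (simp add: S_def)
    qed
    have phideg: "mdeg (Suc p) (\<phi> a) = Suc d"
      using a mdeg_Suc[of p a] mdeg_Suc[of p "\<phi> a"] mdeg_upd_p[of p a]
      by (simp add: S_def \<phi>_def)
    have degG: "mdeg (Suc p) G \<le> Suc d" using mdvd_mdeg[OF G(2), of "Suc p"] phideg by simp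
    have base: "M \<in> J" if M: "M \<in> monomials p" "mdeg p M = mdeg (Suc p) G" for M
    proof -
      have M1: "M \<in> monomials (Suc p)" "M p = 0" using M monp by auto
      have Mdeg: "mdeg (Suc p) M = mdeg (Suc p) G" using M M1 mdeg_Suc[of p M] by simp
      have gr: "(GREATEST s. s < Suc p \<and> M s \<noteq> G s) = p"
        by (rule Greatest_equality) (use M1 Gp in auto)
      have "drl_gt (Suc p) M G" unfolding drl_gt_def using Mdeg gr M1 Gp
        by (auto simp: Let_def)
      then show ?thesis using ar M1 G(1) Mdeg unfolding almost_revlex_def by blast
    qed
    have "S' = {}"
    proof (rule ccontr)
      assume "S' \<noteq> {}"
      then obtain N where N: "N \<in> S'" by blast
      have "N \<in> J" apply (rule up_closed[OF mi _ base]) using N degG by (auto simp: S'_def)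
      then show False using N unfolding S'_def by blast
    qed
    then show ?thesis using c1 c2 hS hS' by simp
  qed
qed


lemma hilb0: "hilb 0 J (Suc d) = 0"
  by (simp add: hilb_def mdeg_def)

lemma mono_tail:
  assumes mi: "monomial_ideal m J" and ar: "almost_revlex m J"
    and le: "hilb m J (Suc d) \<le> hilb m J d"
  shows "hilb m J (Suc (Suc d)) \<le> hilb m J (Suc d)"
proof (cases m)
  case 0
  then show ?thesis by (simp add: hilb0)
next
  case (Suc p)
  have s1: "hilb p (J \<inter> monomials p) (Suc d) = 0"
    using step[of p J d] mi ar le Suc by simp
  have fin: "finite {a \<in> monomials p. mdeg p a = Suc d \<and> a \<notin> J \<inter> monomials p}"
    by (rule finite_subset[OF _ finite_deg]) auto
  have e: "{a \<in> monomials p. mdeg p a = Suc d \<and> a \<notin> J \<inter> monomials p} = {}"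
    using s1 fin unfolding hilb_def by simp
  have base: "M \<in> J" if "M \<in> monomials p" "mdeg p M = Suc d" for M
    using e that by blast
  have e2: "{a \<in> monomials p. mdeg p a = Suc (Suc d) \<and> a \<notin> J \<inter> monomials p} = {}"
  proof (rule equals0I)
    fix a assume a: "a \<in> {a \<in> monomials p. mdeg p a = Suc (Suc d) \<and> a \<notin> J \<inter> monomials p}"
    have "a \<in> J"
      apply (rule up_closed[of "Suc p" J p "Suc d"])
      using mi Suc base a by auto
    then show False using a by blast
  qed
  have "hilb p (J \<inter> monomials p) (Suc (Suc d)) = 0"
    unfolding hilb_def e2 by simp
  then show ?thesis using step[of p J "Suc d"] mi ar Suc by simp
qed

lemma deg0: "a \<in> monomials k \<Longrightarrow> mdeg k a = 0 \<Longrightarrow> a = (\<lambda>_. 0)"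
proof (rule ext)
  fix i assume a: "a \<in> monomials k" "mdeg k a = 0"
  show "a i = 0"
  proof (cases "i < k")
    case True
    then show ?thesis using a(2) unfolding mdeg_def by simp
  next
    case False
    then show ?thesis using a(1) by (simp add: monomials_def)
  qed
qed

lemma hiter_eq:
  assumes mi: "monomial_ideal n I" and ar: "almost_revlex n I" and z: "(\<lambda>_. 0) \<notin> I"
  shows "hiter (hilb n I) i d = hilb (n - i) (I \<inter> monomials (n - i)) d"
proof (induction i arbitrary: d)
  case 0
  have "hilb n I d = hilb n (I \<inter> monomials n) d"
    unfolding hilb_def by (rule arg_cong[where f=card]) auto
  then show ?case by simp
next
  case (Suc i)
  show ?case
  proof (cases d)
    case 0
    have "{a \<in> monomials (n - Suc i). mdeg (n - Suc i) a = 0 \<and> a \<notin> I \<inter> monomials (n - Suc i)}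
        = {(\<lambda>_. 0)}"
      using z deg0 by (auto simp: monomials_def mdeg_def)
    then show ?thesis using 0 by (simp add: hilb_def)
  next
    case (Suc d')
    have h: "hiter (hilb n I) (Suc i) d =
        hilb (n - i) (I \<inter> monomials (n - i)) (Suc d') - hilb (n - i) (I \<inter> monomials (n - i)) d'"
      using Suc.IH Suc by simp
    show ?thesis
    proof (cases "n - i")
      case 0
      then have "n - Suc i = 0" by simp
      then show ?thesis using h 0 Suc by (simp add: hilb0)
    next
      case (Suc p)
      have np: "n - Suc i = p" using Suc by simp
      have mi': "monomial_ideal (Suc p) (I \<inter> monomials (Suc p))"
        using restrict_mi[OF mi, of "Suc p"] Suc by simp
      have ar': "almost_revlex (Suc p) (I \<inter> monomials (Suc p))"
        using restrict_ar[OF ar, of "Suc p"] Suc by simp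
      have eq: "I \<inter> monomials (Suc p) \<inter> monomials p = I \<inter> monomials p"
        using mon_mono[of p "Suc p"] by auto
      show ?thesis using step[OF mi' ar', of d'] h Suc np eq \<open>d = Suc d'\<close> by simp
    qed
  qed
qed

theorem proposition3p6:
  fixes n :: nat and I :: "(nat \<Rightarrow> nat) set"
  assumes "monomial_ideal n I"
    and "almost_revlex n I"
  shows "unimodal_at_each_tail (hilb n I)"
  unfolding unimodal_at_each_tail_def
proof (intro allI impI)
  let ?h = "hilb n I"
  fix i d assume A: "D_index ?h \<le> enat i \<and> i < max 1 (?h 1)" and r: "r_index ?h i \<le> enat d"
  show "hiter ?h i d \<le> hiter ?h i (d - 1)"
  proof (cases "(\<lambda>_. 0) \<in> I")
    case True
    have inI: "a \<in> I" if "a \<in> monomials n" for a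
      using mi_up[OF assms(1) True that] by (simp add: mdvd_def)
    have hz: "?h e = 0" for e
    proof -
      have "{a \<in> monomials n. mdeg n a = e \<and> a \<notin> I} = {}" using inI by blast
      then show ?thesis by (metis card.empty hilb_def)
    qed
    then have "i = 0" using A by simp
    then show ?thesis using hz by simp
  next
    case False
    define g where "g = hilb (n - i) (I \<inter> monomials (n - i))"
    have hg: "hiter ?h i e = g e" for e using hiter_eq[OF assms False] by (simp add: g_def)
    have mt: "g (Suc (Suc e)) \<le> g (Suc e)" if "g (Suc e) \<le> g e" for e
      unfolding g_def
      by (rule mono_tail[OF restrict_mi[OF assms(1)] restrict_ar[OF assms(2)]])
         (use that in \<open>simp_all add: g_def\<close>)
    define P where "P = (\<lambda>d::nat. d \<ge> 1 \<and> g d \<le> g (d - 1))"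
    have ex: "\<exists>d\<ge>1. hiter ?h i d \<le> hiter ?h i (d - 1)"
    proof (rule ccontr)
      assume nex: "\<not> (\<exists>d\<ge>1. hiter ?h i d \<le> hiter ?h i (d - 1))"
      have "r_index ?h i = \<infinity>" unfolding r_index_def using nex by (simp only: if_False)
      then show False using r by simp
    qed
    then have ex': "\<exists>d. P d" using hg by (auto simp: P_def)
    have rl: "Least P \<le> d"
      using r ex hg unfolding r_index_def P_def by simp
    have PL: "P (Least P)" using LeastI_ex[OF ex'] .
    have "P d" using rl
    proof (induction rule: dec_induct)
      case base then show ?case using PL .
    next
      case (step e)
      then obtain e' where e': "e = Suc e'" unfolding P_def by (cases e) auto
      then have "g (Suc (Suc e')) \<le> g (Suc e')" using mt step(3) by (simp add: P_def)
      then show ?case using e' by (simp add: P_def)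
    qed
    then show ?thesis using hg by (simp add: P_def)
  qed
qed

end
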